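(* Let $2\le y\le x$ and let $k\ge0$ be an integer. For $i\ge0$ define $$S_i(x,y)=\{n\le x:\ \text{there is a prime } p>y \text{ with } p^2\mid\phi_i(n)\}.$$ Then $$\left|\Psi(x,P_k)-\Phi_k(x,y)\right|\le\sum_{i=0}^{k-1}|S_i(x,y)|.$$
   Context: $\phi$ is Euler's function, $\phi_0(n)=n$, $\phi_{i+1}(n)=\phi(\phi_i(n))$. $\Phi_k(x,y)=\#\{n\le x:\ p\mid\phi_k(n)\Rightarrow p\le y\}$ ($p$ prime). For a set $P$ of primes, $\Psi(x,P)=\#\{n\le x:\ p\mid n\Rightarrow p\in P\}$. The sets of primes $P_k$ are defined by $P_0=\{p\le y\}$ and $P_{k+1}=\{q\le x\text{ prime}:\ p\mid q-1\Rightarrow p\in P_k\}$. *)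

theory Defs
  imports "HOL-Number_Theory.Number_Theory"
begin

definition phi_iter :: "nat \<Rightarrow> nat \<Rightarrow> nat" where
  "phi_iter i n = (totient ^^ i) n"

definition Phi :: "nat \<Rightarrow> real \<Rightarrow> real \<Rightarrow> nat" where
  "Phi k x y = card {n::nat. 1 \<le> n \<and> real n \<le> x \<and>
      (\<forall>p. prime p \<and> p dvd phi_iter k n \<longrightarrow> real p \<le> y)}"

definition Psi :: "real \<Rightarrow> nat set \<Rightarrow> nat" where
  "Psi x P = card {n::nat. 1 \<le> n \<and> real n \<le> x \<and>
      (\<forall>p. prime p \<and> p dvd n \<longrightarrow> p \<in> P)}"

fun Pset :: "real \<Rightarrow> real \<Rightarrow> nat \<Rightarrow> nat set" where
  "Pset x y 0 = {p. prime p \<and> real p \<le> y}"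
| "Pset x y (Suc k) = {q. prime q \<and> real q \<le> x \<and>
      (\<forall>p. prime p \<and> p dvd (q - 1) \<longrightarrow> p \<in> Pset x y k)}"

definition Sset :: "nat \<Rightarrow> real \<Rightarrow> real \<Rightarrow> nat set" where
  "Sset i x y = {n::nat. 1 \<le> n \<and> real n \<le> x \<and>
      (\<exists>p. prime p \<and> real p > y \<and> p\<^sup>2 dvd phi_iter i n)}"

end

theory Submission
  imports Defs
begin

lemma Pset_mono_step:
  assumes "y \<le> x"
  shows "Pset x y j \<subseteq> Pset x y (Suc j)"
proof (induction j)
  case 0
  show ?case
  proof
    fix q assume q: "q \<in> Pset x y 0"
    hence pq: "prime q" "real q \<le> y" by auto
    have "\<forall>p. prime p \<and> p dvd (q - 1) \<longrightarrow> p \<in> Pset x y 0"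
    proof (intro allI impI)
      fix p assume p: "prime p \<and> p dvd (q - 1)"
      have "q - 1 > 0" using prime_gt_1_nat[OF pq(1)] by simp
      hence "p \<le> q - 1" using p dvd_imp_le by blast
      hence "real p \<le> y" using pq(2) prime_gt_1_nat[OF pq(1)] by linarith
      thus "p \<in> Pset x y 0" using p by simp
    qed
    thus "q \<in> Pset x y (Suc 0)" using pq assms by simp
  qed
next
  case (Suc j)
  thus ?case by auto
qed

lemma Pset0_sub:
  assumes "y \<le> x"
  shows "Pset x y 0 \<subseteq> Pset x y j"
proof (induction j)
  case (Suc j)
  thus ?case using Pset_mono_step[OF assms, of j] by blast
qed simp

definition smooth :: "nat set \<Rightarrow> nat \<Rightarrow> bool" where
  "smooth P m = (\<forall>p. prime p \<and> p dvd m \<longrightarrow> p \<in> P)"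

lemma prime_dvd_totient:
  assumes m: "m > 0" and r: "prime (r::nat)" "r dvd totient m"
  shows "\<exists>p. prime p \<and> p dvd m \<and> (r dvd (p - 1) \<or> (r = p \<and> p^2 dvd m))"
proof -
  have "r dvd (\<Prod>p\<in>prime_factors m. p ^ (multiplicity p m - 1) * (p - 1))"
    using r totient_formula1[OF m] by simp
  then obtain p where p: "p \<in> prime_factors m" "r dvd p ^ (multiplicity p m - 1) * (p - 1)"
    using r(1) prime_dvd_prod_iff[of "prime_factors m" r] by auto
  have pp: "prime p" "p dvd m" using p(1) by auto
  show ?thesis
  proof (cases "r dvd p - 1")
    case True thus ?thesis using pp by blast
  next
    case False
    hence "r dvd p ^ (multiplicity p m - 1)" using p(2) r(1) prime_dvd_mult_iff by blast
    hence rp: "r dvd p" and ne: "multiplicity p m - 1 \<noteq> 0"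
      using r(1) prime_dvd_power[of r p] by (auto simp: not_prime_1)
    hence "r = p" using pp(1) r(1) primes_dvd_imp_eq by blast
    moreover have "2 \<le> multiplicity p m" using ne by simp
    hence "p^2 dvd m" by (rule multiplicity_dvd')
    ultimately show ?thesis using pp by blast
  qed
qed

lemma step:
  assumes yx: "y \<le> x" and m: "m \<ge> 1" "real m \<le> x"
    and nosq: "\<not> (\<exists>p. prime p \<and> real p > y \<and> p\<^sup>2 dvd m)"
  shows "smooth (Pset x y (Suc j)) m \<longleftrightarrow> smooth (Pset x y j) (totient m)"
proof
  assume s: "smooth (Pset x y (Suc j)) m"
  show "smooth (Pset x y j) (totient m)" unfolding smooth_def
  proof (intro allI impI)
    fix r assume r: "prime r \<and> r dvd totient m"
    then obtain p where p: "prime p" "p dvd m" "r dvd (p - 1) \<or> (r = p \<and> p^2 dvd m)"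
      using prime_dvd_totient[of m r] m by auto
    show "r \<in> Pset x y j"
    proof (cases "r dvd (p - 1)")
      case True
      have "p \<in> Pset x y (Suc j)" using s p unfolding smooth_def by blast
      thus ?thesis using True r by simp
    next
      case False
      hence rp: "r = p" and p2: "p^2 dvd m" using p by auto
      have "\<not> real p > y" using nosq p(1) p2 by blast
      hence "real r \<le> y" using rp by simp
      hence "r \<in> Pset x y 0" using r by simp
      thus ?thesis using Pset0_sub[OF yx] by blast
    qed
  qed
next
  assume s: "smooth (Pset x y j) (totient m)"
  show "smooth (Pset x y (Suc j)) m" unfolding smooth_def
  proof (intro allI impI)
    fix p assume p: "prime p \<and> p dvd m"
    have "p \<le> m" using p m dvd_imp_le by auto
    hence px: "real p \<le> x" using m by linarith
    have "totient p dvd totient m" using p totient_dvd by blast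
    hence d: "p - 1 dvd totient m" using p totient_prime by simp
    have "\<forall>r. prime r \<and> r dvd (p - 1) \<longrightarrow> r \<in> Pset x y j"
    proof (intro allI impI)
      fix r assume r: "prime r \<and> r dvd (p - 1)"
      hence "r dvd totient m" using d dvd_trans by blast
      thus "r \<in> Pset x y j" using s r unfolding smooth_def by blast
    qed
    thus "p \<in> Pset x y (Suc j)" using p px by simp
  qed
qed

lemma chain:
  assumes yx: "y \<le> x"
  shows "m \<ge> 1 \<Longrightarrow> real m \<le> x \<Longrightarrow>
    (\<forall>i<k. \<not> (\<exists>p. prime p \<and> real p > y \<and> p\<^sup>2 dvd phi_iter i m)) \<Longrightarrow>
    smooth (Pset x y k) m \<longleftrightarrow> smooth (Pset x y 0) (phi_iter k m)"
proof (induction k arbitrary: m)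
  case 0
  thus ?case by (simp add: phi_iter_def)
next
  case (Suc k)
  have pi: "phi_iter i (totient m) = phi_iter (Suc i) m" for i
    unfolding phi_iter_def funpow_Suc_right comp_def by (rule refl)
  have ns: "\<not> (\<exists>p. prime p \<and> real p > y \<and> p\<^sup>2 dvd m)"
    using Suc.prems(3) by (auto simp: phi_iter_def)
  have t1: "totient m \<ge> 1" using Suc.prems(1) by (simp add: Suc_le_eq)
  have t2: "real (totient m) \<le> x" using Suc.prems(2) totient_le[of m] by (meson of_nat_le_iff order_trans)
  have t3: "\<forall>i<k. \<not> (\<exists>p. prime p \<and> real p > y \<and> p\<^sup>2 dvd phi_iter i (totient m))"
    using Suc.prems(3) unfolding pi by auto
  have "smooth (Pset x y (Suc k)) m \<longleftrightarrow> smooth (Pset x y k) (totient m)"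
    using step[OF yx Suc.prems(1,2) ns] .
  also have "\<dots> \<longleftrightarrow> smooth (Pset x y 0) (phi_iter k (totient m))"
    using Suc.IH[OF t1 t2 t3] .
  finally show ?case unfolding pi .
qed

theorem lemma4p3:
  fixes x y :: real and k :: nat
  assumes "2 \<le> y" and "y \<le> x"
  shows "\<bar>real (Psi x (Pset x y k)) - real (Phi k x y)\<bar>
           \<le> (\<Sum>i<k. real (card (Sset i x y)))"
proof -
  define A where "A = {n::nat. 1 \<le> n \<and> real n \<le> x \<and>
      (\<forall>p. prime p \<and> p dvd n \<longrightarrow> p \<in> Pset x y k)}"
  define B where "B = {n::nat. 1 \<le> n \<and> real n \<le> x \<and>
      (\<forall>p. prime p \<and> p dvd phi_iter k n \<longrightarrow> real p \<le> y)}"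
  define U where "U = (\<Union>i<k. Sset i x y)"
  have fin: "finite {n::nat. real n \<le> x}"
    by (rule finite_subset[of _ "{..nat \<lfloor>x\<rfloor>}"]) (auto, linarith)
  have fA: "finite A" and fB: "finite B"
    unfolding A_def B_def by (auto intro: finite_subset[OF _ fin])
  have fS: "finite (Sset i x y)" for i
    unfolding Sset_def by (auto intro: finite_subset[OF _ fin])
  have fU: "finite U" unfolding U_def using fS by auto
  have key: "n \<in> A \<longleftrightarrow> n \<in> B" if "n \<notin> U" "1 \<le> n" "real n \<le> x" for n
  proof -
    have "\<forall>i<k. \<not> (\<exists>p. prime p \<and> real p > y \<and> p\<^sup>2 dvd phi_iter i n)"
      using that unfolding U_def Sset_def by auto
    from chain[OF assms(2) that(2,3) this]
    show ?thesis unfolding A_def B_def smooth_def using that by auto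
  qed
  have AB: "A - B \<subseteq> U" using key unfolding A_def by auto
  have BA: "B - A \<subseteq> U" using key unfolding B_def by auto
  have "card A \<le> card (B \<union> (A - B))" using fA fB by (intro card_mono) auto
  also have "\<dots> \<le> card B + card (A - B)" by (rule card_Un_le)
  finally have "card A \<le> card B + card (A - B)" .
  moreover have "card B \<le> card A + card (B - A)"
  proof -
    have "card B \<le> card (A \<union> (B - A))" using fA fB by (intro card_mono) auto
    also have "\<dots> \<le> card A + card (B - A)" by (rule card_Un_le)
    finally show ?thesis .
  qed
  moreover have "card (A - B) \<le> card U" "card (B - A) \<le> card U"
    using AB BA fU card_mono by auto
  moreover have "card U \<le> (\<Sum>i<k. card (Sset i x y))"
    unfolding U_def by (rule card_UN_le) simp
  ultimately have "\<bar>real (card A) - real (card B)\<bar> \<le> real (\<Sum>i<k. card (Sset i x y))"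
    by linarith
  thus ?thesis unfolding Psi_def Phi_def A_def[symmetric] B_def[symmetric] by simp
qed

end
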